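(* Let $\lambda=(\lambda_1,\dots,\lambda_l)$ be a partition, $\tau(t)=s_\lambda(t)+\sum_{\lambda<\mu}\xi_\mu s_\mu(t)$ with arbitrary $\xi_\mu\in\mathbb C$, and $0\le k\le l-1$. If $\mathrm{wt}\,\alpha<N_{\lambda,k}$, then $\partial^\alpha\tau\big(\sum_{i=1}^k[x_i]\big)=0$.
   Context: For $t=(t_1,t_2,\dots)$ define $p_m(t)$ by $\exp(\sum_{m\ge1}t_mk^m)=\sum_{m\ge0}p_m(t)k^m$, $p_m=0$ for $m<0$; $s_\mu(t)=\det(p_{\mu_i-i+j}(t))_{1\le i,j\le l}$. $[x]=(x,x^2/2,\dots)$. For $\alpha=(\alpha_1,\alpha_2,\dots)$ with finitely many nonzero entries, $\partial^\alpha=\prod_i(\partial/\partial t_i)^{\alpha_i}$, $\mathrm{wt}\,\alpha=\sum_ii\alpha_i$. $N_{\lambda,k}=\lambda_{k+1}+\dots+\lambda_l$. $\lambda<\mu$ means $\lambda_i\le\mu_i$ for all $i$ and $\lambda\ne\mu$. $\tau$ is a formal series, differentiated termwise, evaluations being formal power series in the $x_i$; for $k=0$ evaluation is at $t=0$. *)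

theory Defs
  imports "HOL-Library.Poly_Mapping" "HOL-Analysis.Infinite_Sum" "Jordan_Normal_Form.Determinant"
begin

text \<open>Polynomials in the variables t_1, t_2, ... (variable t_i is index i; index 0 is
  never used), and likewise polynomials in x_1,...,x_k, with complex coefficients.\<close>
type_synonym cpoly = "(nat \<Rightarrow>\<^sub>0 nat) \<Rightarrow>\<^sub>0 complex"

definition wt :: "(nat \<Rightarrow>\<^sub>0 nat) \<Rightarrow> nat" where
  "wt a = (\<Sum>i\<in>Poly_Mapping.keys a. i * Poly_Mapping.lookup a i)"

text \<open>p_m(t): coefficient of k^m in exp(sum_m t_m k^m) = prod_m sum_a t_m^a k^(m a)/a!,
  i.e. the sum over multi-indices a (supported on indices >= 1) of weight m of t^a / a!;
  and p_m = 0 for m < 0.\<close>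
definition p_poly :: "int \<Rightarrow> cpoly" where
  "p_poly m = (if m < 0 then 0 else
     (\<Sum>a\<in>{a. Poly_Mapping.lookup a 0 = 0 \<and> wt a = nat m}.
        Poly_Mapping.single a (1 / of_nat (\<Prod>i\<in>Poly_Mapping.keys a. fact (Poly_Mapping.lookup a i)))))"

definition schur :: "nat list \<Rightarrow> cpoly" where
  "schur mu = det (mat (length mu) (length mu)
      (\<lambda>(i, j). p_poly (int (mu ! i) - int i + int j)))"

definition is_partition :: "nat list \<Rightarrow> bool" where
  "is_partition mu \<longleftrightarrow> sorted_wrt (\<ge>) mu \<and> 0 \<notin> set mu"

definition part :: "nat list \<Rightarrow> nat \<Rightarrow> nat" where
  "part mu i = (if i < length mu then mu ! i else 0)"

definition part_less :: "nat list \<Rightarrow> nat list \<Rightarrow> bool" where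
  "part_less lam mu \<longleftrightarrow> (\<forall>i. part lam i \<le> part mu i) \<and> lam \<noteq> mu"

definition N_lk :: "nat list \<Rightarrow> nat \<Rightarrow> nat" where
  "N_lk lam k = sum_list (drop k lam)"

definition pD :: "nat \<Rightarrow> cpoly \<Rightarrow> cpoly" where
  "pD i P = (\<Sum>m\<in>Poly_Mapping.keys P.
      Poly_Mapping.single (m - Poly_Mapping.single i 1) (Poly_Mapping.lookup P m * of_nat (Poly_Mapping.lookup m i)))"

definition dpow :: "(nat \<Rightarrow>\<^sub>0 nat) \<Rightarrow> cpoly \<Rightarrow> cpoly" where
  "dpow alpha P = foldr (\<lambda>i. pD i ^^ Poly_Mapping.lookup alpha i) (sorted_list_of_set (Poly_Mapping.keys alpha)) P"

text \<open>The value of t_j at t = [x_1] + ... + [x_k], namely sum_i x_i^j / j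
  (a polynomial in x_1..x_k, variable x_i is index i).\<close>
definition tval :: "nat \<Rightarrow> nat \<Rightarrow> cpoly" where
  "tval k j = (\<Sum>i\<in>{1..k}. Poly_Mapping.single (Poly_Mapping.single i j) (1 / of_nat j))"

text \<open>Evaluation P(sum_{i=1}^k [x_i]); for k = 0 this is evaluation at t = 0.\<close>
definition eval_at :: "nat \<Rightarrow> cpoly \<Rightarrow> cpoly" where
  "eval_at k P = (\<Sum>m\<in>Poly_Mapping.keys P.
      Poly_Mapping.single 0 (Poly_Mapping.lookup P m) * (\<Prod>j\<in>Poly_Mapping.keys m. tval k j ^ Poly_Mapping.lookup m j))"

end

theory Submission
  imports Defs
begin


abbreviation lk where "lk \<equiv> Poly_Mapping.lookup"
abbreviation ky where "ky \<equiv> Poly_Mapping.keys"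
abbreviation sg where "sg \<equiv> Poly_Mapping.single"

definition lin :: "((nat \<Rightarrow>\<^sub>0 nat) \<Rightarrow> complex \<Rightarrow> 'b::comm_monoid_add) \<Rightarrow> cpoly \<Rightarrow> 'b" where
 "lin f P = (\<Sum>m\<in>ky P. f m (lk P m))"

lemma lin_superset:
  assumes "finite A" "ky P \<subseteq> A" "\<And>m. f m 0 = 0"
  shows "lin f P = (\<Sum>m\<in>A. f m (lk P m))"
  unfolding lin_def
  by (rule sum.mono_neutral_left) (use assms in \<open>auto simp: not_in_keys_iff_lookup_eq_zero\<close>)

lemma lin_add:
  assumes "\<And>m. f m 0 = 0" "\<And>m a b. f m (a + b) = f m a + f m b"
  shows "lin f (P + Q) = lin f P + lin f Q"
proof -
  let ?A = "ky P \<union> ky Q"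
  have "lin f (P+Q) = (\<Sum>m\<in>?A. f m (lk (P+Q) m))"
    by (rule lin_superset) (use assms keys_add[of P Q] in auto)
  also have "\<dots> = (\<Sum>m\<in>?A. f m (lk P m)) + (\<Sum>m\<in>?A. f m (lk Q m))"
    by (simp add: lookup_add assms(2) sum.distrib)
  also have "\<dots> = lin f P + lin f Q"
    using lin_superset[of ?A P f] lin_superset[of ?A Q f] assms(1) by simp
  finally show ?thesis .
qed

lemma lin_zero[simp]: "lin f 0 = 0"
  by (simp add: lin_def)

lemma lin_single: "(\<And>m. f m 0 = 0) \<Longrightarrow> lin f (sg m c) = f m c"
  by (simp add: lin_def)

lemma lin_sum:
  assumes "\<And>m. f m 0 = 0" "\<And>m a b. f m (a + b) = f m a + f m b"
  shows "lin f (sum F A) = (\<Sum>a\<in>A. lin f (F a))"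
  by (induction A rule: infinite_finite_induct) (simp_all add: lin_add[OF assms])

lemma pm_decomp: "P = (\<Sum>m\<in>ky P. sg m (lk P m))"
  by (rule poly_mapping_eqI) (simp add: lookup_sum lookup_single when_def in_keys_iff)

lemma pm_mult_decomp:
  "(P::cpoly) * Q = (\<Sum>m\<in>ky P. \<Sum>n\<in>ky Q. sg (m + n) (lk P m * lk Q n))"
proof -
  have "P * Q = (\<Sum>m\<in>ky P. sg m (lk P m)) * (\<Sum>n\<in>ky Q. sg n (lk Q n))"
    using pm_decomp[of P] pm_decomp[of Q] by simp
  also have "\<dots> = (\<Sum>m\<in>ky P. \<Sum>n\<in>ky Q. sg (m + n) (lk P m * lk Q n))"
    by (simp add: sum_product mult_single)
  finally show ?thesis .
qed

definition df :: "nat \<Rightarrow> (nat \<Rightarrow>\<^sub>0 nat) \<Rightarrow> complex \<Rightarrow> cpoly" where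
  "df i m c = sg (m - sg i 1) (c * of_nat (lk m i))"

lemma df0: "df i m 0 = 0" by (simp add: df_def)
lemma dfadd: "df i m (a + b) = df i m a + df i m b" by (simp add: df_def distrib_right single_add)

lemma pD_lin: "pD i P = lin (df i) P"
  by (simp add: pD_def lin_def df_def)

lemma pD_add: "pD i (P + Q) = pD i P + pD i Q"
  by (simp add: pD_lin lin_add df0 dfadd)

lemma pD_sum: "pD i (sum F A) = (\<Sum>a\<in>A. pD i (F a))"
  by (simp add: pD_lin lin_sum df0 dfadd)

lemma pD_single: "pD i (sg m c) = sg (m - sg i 1) (c * of_nat (lk m i))"
  by (simp add: pD_lin lin_single df0 df_def)

lemma pD_const: "pD i (sg 0 c) = 0"
  by (simp add: pD_single)

lemma pD_of_int[simp]: "pD i (of_int z) = 0"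
  using pD_const[of i "of_int z"] by simp

lemma pD_zero[simp]: "pD i 0 = 0" by (simp add: pD_def)

lemma minus_e_add:
  assumes "lk m i \<ge> 1"
  shows "m - sg i 1 + n = m + n - sg i (1::nat)"
  by (rule poly_mapping_eqI) (use assms in \<open>auto simp: lookup_add lookup_minus lookup_single when_def\<close>)

lemma pD_mono_mult:
  "pD i (sg m a * sg n b) = pD i (sg m a) * sg n b + sg m a * pD i (sg n b)"
proof -
  have L: "pD i (sg m a * sg n b) = sg (m + n - sg i 1) (a * b * of_nat (lk m i + lk n i))"
    by (simp add: mult_single pD_single lookup_add)
  have R1: "pD i (sg m a) * sg n b = sg (m + n - sg i 1) (a * b * of_nat (lk m i))"
  proof (cases "lk m i \<ge> 1")
    case True
    have "pD i (sg m a) * sg n b = sg (m - sg i 1 + n) (a * of_nat (lk m i) * b)"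
      by (simp only: pD_single mult_single)
    then show ?thesis using minus_e_add[OF True, of n] by (simp add: algebra_simps)
  next
    case False
    then have "lk m i = 0" by simp
    then show ?thesis by (simp add: pD_single)
  qed
  have R2: "sg m a * pD i (sg n b) = sg (m + n - sg i 1) (a * b * of_nat (lk n i))"
  proof (cases "lk n i \<ge> 1")
    case True
    have "sg m a * pD i (sg n b) = sg (m + (n - sg i 1)) (a * (b * of_nat (lk n i)))"
      by (simp only: pD_single mult_single)
    then show ?thesis using minus_e_add[OF True, of m] by (simp add: algebra_simps)
  next
    case False
    then have "lk n i = 0" by simp
    then show ?thesis by (simp add: pD_single)
  qed
  show ?thesis unfolding L R1 R2 by (simp add: single_add[symmetric] distrib_left)
qed

lemma pD_mult: "pD i (P * Q) = pD i P * Q + P * pD i Q"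
proof -
  have "pD i (P * Q) = (\<Sum>m\<in>ky P. \<Sum>n\<in>ky Q. pD i (sg m (lk P m) * sg n (lk Q n)))"
    by (subst pm_mult_decomp) (simp add: pD_sum mult_single)
  also have "\<dots> = (\<Sum>m\<in>ky P. \<Sum>n\<in>ky Q. pD i (sg m (lk P m)) * sg n (lk Q n))
     + (\<Sum>m\<in>ky P. \<Sum>n\<in>ky Q. sg m (lk P m) * pD i (sg n (lk Q n)))"
    by (simp add: pD_mono_mult sum.distrib)
  also have "\<dots> = (\<Sum>m\<in>ky P. pD i (sg m (lk P m))) * (\<Sum>n\<in>ky Q. sg n (lk Q n))
     + (\<Sum>m\<in>ky P. sg m (lk P m)) * (\<Sum>n\<in>ky Q. pD i (sg n (lk Q n)))"
    by (simp add: sum_product)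
  also have "\<dots> = pD i P * Q + P * pD i Q"
    by (simp add: pD_sum[symmetric] pm_decomp[symmetric])
  finally show ?thesis .
qed

definition Mon :: "nat \<Rightarrow> (nat \<Rightarrow>\<^sub>0 nat) \<Rightarrow> cpoly" where
  "Mon k m = (\<Prod>j\<in>ky m. tval k j ^ lk m j)"

lemma Mon_superset:
  assumes "finite A" "ky m \<subseteq> A"
  shows "Mon k m = (\<Prod>j\<in>A. tval k j ^ lk m j)"
  unfolding Mon_def
  by (rule prod.mono_neutral_left) (use assms in \<open>auto simp: not_in_keys_iff_lookup_eq_zero\<close>)

lemma Mon_add: "Mon k (m + n) = Mon k m * Mon k n"
proof -
  let ?A = "ky m \<union> ky n"
  have "Mon k (m + n) = (\<Prod>j\<in>?A. tval k j ^ lk (m + n) j)"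
    by (rule Mon_superset) (use keys_add[of m n] in auto)
  also have "\<dots> = (\<Prod>j\<in>?A. tval k j ^ lk m j) * (\<Prod>j\<in>?A. tval k j ^ lk n j)"
    by (simp add: lookup_add power_add prod.distrib)
  also have "\<dots> = Mon k m * Mon k n"
    using Mon_superset[of ?A m k] Mon_superset[of ?A n k] by simp
  finally show ?thesis .
qed

lemma Mon_zero[simp]: "Mon k 0 = 1" by (simp add: Mon_def)

definition ef :: "nat \<Rightarrow> (nat \<Rightarrow>\<^sub>0 nat) \<Rightarrow> complex \<Rightarrow> cpoly" where
  "ef k m c = sg 0 c * Mon k m"

lemma ef0: "ef k m 0 = 0" by (simp add: ef_def)
lemma efadd: "ef k m (a + b) = ef k m a + ef k m b" by (simp add: ef_def distrib_right single_add)

lemma ev_lin: "eval_at k P = lin (ef k) P"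
  by (simp add: eval_at_def lin_def ef_def Mon_def)

lemma ev_add: "eval_at k (P + Q) = eval_at k P + eval_at k Q"
  by (simp add: ev_lin lin_add ef0 efadd)

lemma ev_sum: "eval_at k (sum F A) = (\<Sum>a\<in>A. eval_at k (F a))"
  by (simp add: ev_lin lin_sum ef0 efadd)

lemma ev_single: "eval_at k (sg m c) = sg 0 c * Mon k m"
  by (simp add: ev_lin lin_single ef0 ef_def)

lemma ev_single_mult: "eval_at k (sg (m + n) (a * b)) = eval_at k (sg m a) * eval_at k (sg n b)"
proof -
  have e: "sg 0 a * sg 0 b = sg 0 (a * b)" using mult_single[of 0 a 0 b] by simp
  have "eval_at k (sg (m + n) (a * b)) = (sg 0 a * sg 0 b) * (Mon k m * Mon k n)"
    by (simp add: ev_single Mon_add e)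
  also have "\<dots> = (sg 0 a * Mon k m) * (sg 0 b * Mon k n)"
    using mult_single[of 0 a 0 b] by (simp add: mult_ac)
  finally show ?thesis by (simp add: ev_single)
qed

lemma ev_mult: "eval_at k (P * Q) = eval_at k P * eval_at k Q"
proof -
  have "eval_at k (P * Q) = (\<Sum>m\<in>ky P. \<Sum>n\<in>ky Q. eval_at k (sg (m + n) (lk P m * lk Q n)))"
    by (subst pm_mult_decomp) (simp add: ev_sum)
  also have "\<dots> = (\<Sum>m\<in>ky P. \<Sum>n\<in>ky Q. eval_at k (sg m (lk P m)) * eval_at k (sg n (lk Q n)))"
    by (simp add: ev_single_mult)
  also have "\<dots> = (\<Sum>m\<in>ky P. eval_at k (sg m (lk P m))) * (\<Sum>n\<in>ky Q. eval_at k (sg n (lk Q n)))"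
    by (simp add: sum_product)
  also have "\<dots> = eval_at k P * eval_at k Q"
    by (simp add: ev_sum[symmetric] pm_decomp[symmetric])
  finally show ?thesis .
qed

lemma ev_one: "eval_at k 1 = 1"
  using ev_single[of k 0 1] by simp

lemma ev_zero: "eval_at k 0 = 0"
  by (simp add: eval_at_def)

lemma ev_hom: "comm_ring_hom (eval_at k)"
  by unfold_locales (simp_all add: ev_add ev_mult ev_one ev_zero)




section \<open>p polynomials\<close>

definition Adm :: "nat \<Rightarrow> (nat \<Rightarrow>\<^sub>0 nat) set" where
  "Adm n = {a. lk a 0 = 0 \<and> wt a = n}"

definition fct :: "(nat \<Rightarrow>\<^sub>0 nat) \<Rightarrow> nat" where
  "fct a = (\<Prod>i\<in>ky a. fact (lk a i))"

lemma p_poly_eq: "p_poly m = (if m < 0 then 0 else (\<Sum>a\<in>Adm (nat m). sg a (1 / of_nat (fct a))))"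
  by (simp add: p_poly_def Adm_def fct_def)

lemma wt_superset:
  assumes "finite A" "ky a \<subseteq> A"
  shows "wt a = (\<Sum>i\<in>A. i * lk a i)"
  unfolding wt_def
  by (rule sum.mono_neutral_left) (use assms in \<open>auto simp: not_in_keys_iff_lookup_eq_zero\<close>)

lemma wt_add: "wt (a + b) = wt a + wt b"
proof -
  let ?A = "ky a \<union> ky b"
  have "wt (a + b) = (\<Sum>i\<in>?A. i * lk (a + b) i)"
    by (rule wt_superset) (use keys_add[of a b] in auto)
  also have "\<dots> = (\<Sum>i\<in>?A. i * lk a i) + (\<Sum>i\<in>?A. i * lk b i)"
    by (simp add: lookup_add sum.distrib algebra_simps)
  also have "\<dots> = wt a + wt b"
    using wt_superset[of ?A a] wt_superset[of ?A b] by simp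
  finally show ?thesis .
qed

lemma wt_single: "wt (sg i n) = i * n"
  by (simp add: wt_def)

lemma wt_ge: "i * lk a i \<le> wt a"
proof (cases "i \<in> ky a")
  case True
  then show ?thesis unfolding wt_def
    by (rule member_le_sum[where f="\<lambda>i. i * lk a i"]) auto
next
  case False
  then show ?thesis by (simp add: not_in_keys_iff_lookup_eq_zero)
qed

lemma finite_Adm: "finite (Adm n)"
proof -
  let ?F = "{f. \<forall>x. (x \<in> {..n} \<longrightarrow> f x \<in> {..n}) \<and> (x \<notin> {..n} \<longrightarrow> f x = (0::nat))}"
  have fin: "finite ?F" by (rule finite_set_of_finite_funs) auto
  have sub: "lk ` Adm n \<subseteq> ?F"
  proof
    fix f assume "f \<in> lk ` Adm n"
    then obtain a where a: "a \<in> Adm n" "f = lk a" by auto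
    have "f x \<in> {..n}" if "x \<in> {..n}" for x
    proof (cases "x = 0")
      case True then show ?thesis using a by (simp add: Adm_def)
    next
      case False
      then have "lk a x \<le> x * lk a x" by simp
      also have "\<dots> \<le> n" using wt_ge[of x a] a by (simp add: Adm_def)
      finally show ?thesis using a by simp
    qed
    moreover have "f x = 0" if "x \<notin> {..n}" for x
    proof (rule ccontr)
      assume "f x \<noteq> 0"
      then have "x \<le> x * lk a x" using a by simp
      also have "\<dots> \<le> n" using wt_ge[of x a] a by (simp add: Adm_def)
      finally show False using that by simp
    qed
    ultimately show "f \<in> ?F" by auto
  qed
  have "finite (lk ` Adm n)" using finite_subset[OF sub fin] .
  moreover have "inj_on lk (Adm n)" by (rule inj_onI) (metis poly_mapping_eqI)
  ultimately show ?thesis by (rule finite_imageD)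
qed

lemma fct_superset:
  assumes "finite A" "ky a \<subseteq> A"
  shows "fct a = (\<Prod>i\<in>A. fact (lk a i))"
  unfolding fct_def
  by (rule prod.mono_neutral_left) (use assms in \<open>auto simp: not_in_keys_iff_lookup_eq_zero\<close>)

lemma fct_pos: "fct a > 0"
  by (simp add: fct_def)

lemma fct_add_e: "fct (b + sg s 1) = fct b * (lk b s + 1)"
proof -
  let ?A = "insert s (ky b)"
  have fin: "finite ?A" by simp
  have "fct (b + sg s 1) = (\<Prod>i\<in>?A. fact (lk (b + sg s 1) i))"
    by (rule fct_superset) (use keys_add[of b "sg s 1"] in auto)
  also have "\<dots> = fact (lk b s + 1) * (\<Prod>i\<in>?A - {s}. fact (lk b i))"
    by (subst prod.remove[OF fin, of s]) (auto simp: lookup_add lookup_single intro!: prod.cong)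
  also have "fct b = fact (lk b s) * (\<Prod>i\<in>?A - {s}. fact (lk b i))"
    by (subst fct_superset[OF fin]) (auto simp: prod.remove[OF fin, of s])
  ultimately show ?thesis by (simp add: algebra_simps)
qed

lemma add_e_minus: "b + sg s 1 - sg s (1::nat) = b"
  by (rule poly_mapping_eqI) (auto simp: lookup_add lookup_minus lookup_single when_def)

lemma minus_e_add2: "lk a s \<noteq> 0 \<Longrightarrow> a - sg s 1 + sg s (1::nat) = a"
  by (rule poly_mapping_eqI) (auto simp: lookup_add lookup_minus lookup_single when_def)

lemma frac_aux:
  assumes "f > (0::nat)"
  shows "(1 + of_nat x) / (of_nat f + of_nat f * of_nat x) = (1 / of_nat f :: complex)"
proof -
  have a: "(1 + of_nat x :: complex) \<noteq> 0" using of_nat_neq_0[of x, where ?'a=complex] by (simp add: add.commute)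
  have b: "(of_nat f :: complex) \<noteq> 0" using assms by simp
  have "of_nat f + of_nat f * of_nat x = (of_nat f :: complex) * (1 + of_nat x)" by (simp add: algebra_simps)
  then show ?thesis using a b by simp
qed

lemma coef_shift: "sg (b + sg s 1 - sg s 1) (1 / of_nat (fct (b + sg s 1)) * of_nat (lk (b + sg s 1) s))
   = sg b (1 / of_nat (fct b) :: complex)"
proof -
  have "fct b > 0" by (rule fct_pos)
  then show ?thesis
    using fct_add_e[of b s] add_e_minus[of b s] by (simp add: lookup_add frac_aux)
qed

lemma pD_p:
  assumes s: "s \<ge> 1"
  shows "pD s (p_poly m) = p_poly (m - int s)"
proof (cases "m < 0")
  case True then show ?thesis by (simp add: p_poly_eq)
next
  case False
  define n where "n = nat m"
  have mn: "m = int n" using False n_def by simp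
  have L: "pD s (p_poly m) = (\<Sum>a\<in>Adm n. sg (a - sg s 1) (1 / of_nat (fct a) * of_nat (lk a s)))"
    using False by (simp add: p_poly_eq n_def pD_sum pD_single)
  show ?thesis
  proof (cases "n < s")
    case True
    have "lk a s = 0" if "a \<in> Adm n" for a
    proof (rule ccontr)
      assume "lk a s \<noteq> 0"
      then have "s \<le> s * lk a s" by simp
      also have "\<dots> \<le> n" using wt_ge[of s a] that by (simp add: Adm_def)
      finally show False using True by simp
    qed
    then have "pD s (p_poly m) = 0" unfolding L by (intro sum.neutral) simp
    moreover have "p_poly (m - int s) = 0" using True mn by (simp add: p_poly_eq)
    ultimately show ?thesis by simp
  next
    case False
    have R: "p_poly (m - int s) = (\<Sum>b\<in>Adm (n - s). sg b (1 / of_nat (fct b)))"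
      using False mn by (simp add: p_poly_eq nat_diff_distrib)
    let ?S = "{a\<in>Adm n. lk a s \<noteq> 0}"
    let ?g = "\<lambda>a. sg (a - sg s 1) (1 / of_nat (fct a) * of_nat (lk a s) :: complex)"
    have "(\<Sum>a\<in>Adm n. ?g a) = (\<Sum>a\<in>?S. ?g a)"
      by (rule sum.mono_neutral_cong_right) (auto simp: finite_Adm)
    also have "\<dots> = (\<Sum>b\<in>Adm (n - s). sg b (1 / of_nat (fct b)))"
    proof (rule sum.reindex_bij_witness[where i="\<lambda>b. b + sg s 1" and j="\<lambda>a. a - sg s 1"])
      fix a assume a: "a \<in> ?S"
      have ae: "a - sg s 1 + sg s 1 = a" using a by (intro minus_e_add2) auto
      show "a - sg s 1 + sg s 1 = a" by (rule ae)
      have w: "wt (a - sg s 1) + s = n"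
        using wt_add[of "a - sg s 1" "sg s 1"] a ae by (simp add: wt_single Adm_def)
      show "a - sg s 1 \<in> Adm (n - s)"
        using a w by (auto simp: Adm_def lookup_minus)
      show "sg (a - sg s 1) (1 / of_nat (fct (a - sg s 1))) = ?g a"
        using coef_shift[of "a - sg s 1" s] unfolding ae by simp
    next
      fix b assume b: "b \<in> Adm (n - s)"
      show "b + sg s 1 - sg s 1 = b" by (rule add_e_minus)
      show "b + sg s 1 \<in> ?S"
        using b s False by (auto simp: Adm_def lookup_add lookup_single wt_add wt_single)
    qed
    finally show ?thesis using L R by simp
  qed
qed

definition T :: "nat \<Rightarrow> cpoly" where "T j = sg (sg j 1) 1"

lemma of_nat_mult_sg: "(of_nat j :: cpoly) * sg a y = sg a (of_nat j * y)"
  by (metis single_of_nat mult_single add_0)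

lemma keys_Adm: "a \<in> Adm n \<Longrightarrow> ky a \<subseteq> {1..n}"
proof
  fix i assume a: "a \<in> Adm n" and i: "i \<in> ky a"
  then have "lk a i \<noteq> 0" by (simp add: in_keys_iff)
  then have "i \<le> i * lk a i" by simp
  also have "\<dots> \<le> n" using wt_ge[of i a] a by (simp add: Adm_def)
  finally show "i \<in> {1..n}" using a i \<open>lk a i \<noteq> 0\<close>
    by (cases "i = 0") (auto simp: Adm_def)
qed

lemma T_pD_single: "T j * pD j (sg a c) = sg a (c * of_nat (lk a j))"
proof (cases "lk a j = 0")
  case True then show ?thesis by (simp add: pD_single)
next
  case False
  have "T j * pD j (sg a c) = sg (sg j 1 + (a - sg j 1)) (c * of_nat (lk a j))"
    by (simp add: T_def pD_single mult_single)
  also have "sg j 1 + (a - sg j 1) = a" using minus_e_add2[OF False] by (simp add: add.commute)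
  finally show ?thesis .
qed

lemma single_sum: "sg a (sum f A) = (\<Sum>i\<in>A. sg a (f i))"
  by (induction A rule: infinite_finite_induct) (simp_all add: single_add)

lemma euler_mono:
  assumes "a \<in> Adm n"
  shows "(\<Sum>j=1..n. of_nat j * T j * pD j (sg a c)) = of_nat n * sg a c"
proof -
  have "(\<Sum>j=1..n. of_nat j * T j * pD j (sg a c)) = (\<Sum>j=1..n. sg a (c * of_nat (j * lk a j)))"
    by (intro sum.cong refl) (simp only: mult.assoc T_pD_single of_nat_mult_sg of_nat_mult, simp add: mult_ac)
  also have "\<dots> = sg a (c * of_nat (\<Sum>j=1..n. j * lk a j))"
    by (simp add: single_sum sum_distrib_left)
  also have "(\<Sum>j=1..n. j * lk a j) = n"
    using wt_superset[of "{1..n}" a] keys_Adm[OF assms] assms by (simp add: Adm_def)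
  finally show ?thesis by (simp add: of_nat_mult_sg mult.commute)
qed

lemma newton_t:
  "of_nat n * p_poly (int n) = (\<Sum>j=1..n. of_nat j * T j * p_poly (int n - int j))"
proof -
  have "(\<Sum>j=1..n. of_nat j * T j * p_poly (int n - int j)) = (\<Sum>j=1..n. of_nat j * T j * pD j (p_poly (int n)))"
    by (intro sum.cong refl) (simp add: pD_p)
  also have "\<dots> = (\<Sum>a\<in>Adm n. \<Sum>j=1..n. of_nat j * T j * pD j (sg a (1 / of_nat (fct a))))"
    unfolding p_poly_eq by (simp add: pD_sum sum_distrib_left, rule sum.swap)
  also have "\<dots> = (\<Sum>a\<in>Adm n. of_nat n * sg a (1 / of_nat (fct a)))"
    by (intro sum.cong refl euler_mono)
  also have "\<dots> = of_nat n * p_poly (int n)"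
    by (simp add: p_poly_eq sum_distrib_left)
  finally show ?thesis by simp
qed




section \<open>Evaluated p\<close>

definition G :: "nat \<Rightarrow> int \<Rightarrow> cpoly" where "G k n = eval_at k (p_poly n)"
definition X :: "nat \<Rightarrow> cpoly" where "X i = sg (sg i 1) 1"
definition S :: "nat \<Rightarrow> nat \<Rightarrow> cpoly" where "S k j = (\<Sum>i=1..k. sg (sg i j) 1)"

lemma G_neg: "n < 0 \<Longrightarrow> G k n = 0"
  by (simp add: G_def p_poly_eq ev_zero)

lemma Adm0: "Adm 0 = {0}"
proof -
  have "a = 0" if "a \<in> Adm 0" for a
  proof -
    have "ky a \<subseteq> {1..0}" by (rule keys_Adm[OF that])
    then show ?thesis by simp
  qed
  moreover have "0 \<in> Adm 0" by (simp add: Adm_def wt_def)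
  ultimately show ?thesis by blast
qed

lemma p0: "p_poly 0 = 1"
  by (simp add: p_poly_eq Adm0 fct_def)

lemma G0: "G k 0 = 1"
  by (simp add: G_def p0 ev_one)

lemma ev_T: "eval_at k (T j) = tval k j"
  unfolding T_def ev_single Mon_def by simp

lemma S_tval: "j \<ge> 1 \<Longrightarrow> of_nat j * tval k j = S k j"
  by (simp add: tval_def S_def sum_distrib_left of_nat_mult_sg)

lemma X_pow: "X i ^ j = sg (sg i j) 1"
proof (induction j)
  case 0 then show ?case by (simp add: X_def)
next
  case (Suc j)
  have e: "sg i (Suc j) = sg i 1 + sg i (j::nat)" by (metis single_add plus_1_eq_Suc)
  have "X i ^ Suc j = X i * X i ^ j" by simp
  also have "\<dots> = sg (sg i 1) 1 * sg (sg i j) 1" unfolding Suc.IH by (simp only: X_def)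
  also have "\<dots> = sg (sg i 1 + sg i j) 1" by (simp add: mult_single)
  also have "\<dots> = sg (sg i (Suc j)) 1" by (simp only: e)
  finally show ?case .
qed

lemma S_Suc: "S (Suc k) j = S k j + X (Suc k) ^ j"
  unfolding X_pow S_def by (simp add: sum.cl_ivl_Suc)

lemma S_0: "S 0 j = 0" by (simp add: S_def)

lemma sum1n: "(\<Sum>j=1..n. f j) = (\<Sum>j<n. f (Suc j))"
  using sum.atLeast1_atMost_eq[of f n] by simp

lemma newton_G:
  "of_nat n * G k (int n) = (\<Sum>j<n. S k (Suc j) * G k (int (n - Suc j)))"
proof -
  interpret ev: comm_ring_hom "eval_at k" by (rule ev_hom)
  have "of_nat n * G k (int n) = eval_at k (of_nat n * p_poly (int n))"
    by (simp only: G_def ev_mult ev.hom_of_nat)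
  also have "\<dots> = eval_at k (\<Sum>j<n. of_nat (Suc j) * T (Suc j) * p_poly (int n - int (Suc j)))"
    by (subst newton_t, subst sum1n, rule refl)
  also have "\<dots> = (\<Sum>j<n. eval_at k (of_nat (Suc j) * T (Suc j) * p_poly (int n - int (Suc j))))"
    by (rule ev_sum)
  also have "\<dots> = (\<Sum>j<n. S k (Suc j) * G k (int (n - Suc j)))"
  proof (rule sum.cong[OF refl])
    fix j assume "j \<in> {..<n}"
    then have e: "int n - int (Suc j) = int (n - Suc j)" by simp
    have "eval_at k (of_nat (Suc j) * T (Suc j) * p_poly (int n - int (Suc j)))
       = of_nat (Suc j) * tval k (Suc j) * G k (int n - int (Suc j))"
      by (simp only: ev_mult ev.hom_of_nat ev_T G_def)
    also have "\<dots> = S k (Suc j) * G k (int (n - Suc j))"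
    proof -
      have st: "of_nat (Suc j) * tval k (Suc j) = S k (Suc j)" by (rule S_tval) simp
      show ?thesis unfolding e st ..
    qed
    finally show "eval_at k (of_nat (Suc j) * T (Suc j) * p_poly (int n - int (Suc j))) = S k (Suc j) * G k (int (n - Suc j))" .
  qed
  finally show ?thesis .
qed

lemma cancel_of_nat:
  assumes "n \<noteq> 0" "(of_nat n :: cpoly) * P = of_nat n * Q"
  shows "P = Q"
proof -
  have "sg 0 (1 / of_nat n) * (of_nat n :: cpoly) = 1"
    using assms(1) by (simp add: single_of_nat[symmetric] mult_single del: single_of_nat)
  then have "P = sg 0 (1 / of_nat n) * (of_nat n * P)" "Q = sg 0 (1 / of_nat n) * (of_nat n * Q)"
    by (simp_all add: mult.assoc[symmetric])
  then show ?thesis using assms(2) by simp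
qed

lemma newton_unique:
  fixes f h :: "nat \<Rightarrow> cpoly"
  assumes F: "\<And>n. of_nat n * f n = (\<Sum>j<n. c (Suc j) * f (n - Suc j))"
    and H: "\<And>n. of_nat n * h n = (\<Sum>j<n. c (Suc j) * h (n - Suc j))" and f0: "f 0 = h 0"
  shows "f n = h n"
proof (induction n rule: less_induct)
  case (less n)
  show ?case
  proof (cases "n = 0")
    case True then show ?thesis using f0 by simp
  next
    case False
    have "(\<Sum>j<n. c (Suc j) * f (n - Suc j)) = (\<Sum>j<n. c (Suc j) * h (n - Suc j))"
      by (rule sum.cong[OF refl]) (use less.IH in \<open>simp add: False\<close>)
    then have "of_nat n * f n = of_nat n * h n" using F[of n] H[of n] by simp
    then show ?thesis using cancel_of_nat False by blast
  qed
qed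

lemma G_zero_var: "G 0 (int n) = (if n = 0 then 1 else 0)"
proof (cases "n = 0")
  case True then show ?thesis by (simp add: G0)
next
  case False
  have "of_nat n * G 0 (int n) = of_nat n * 0" using newton_G[of n 0] by (simp add: S_0)
  then show ?thesis using cancel_of_nat False by auto
qed

lemma G_rec_nat:
  "G (Suc k) (int n) - (case n of 0 \<Rightarrow> 0 | Suc m \<Rightarrow> X (Suc k) * G (Suc k) (int m)) = G k (int n)"
proof -
  define g where "g n = G (Suc k) (int n)" for n
  define h where "h n = G k (int n)" for n
  define x where "x = X (Suc k)"
  define f where "f n = g n - (case n of 0 \<Rightarrow> 0 | Suc m \<Rightarrow> x * g m)" for n
  have Ng: "of_nat n * g n = (\<Sum>j<n. S (Suc k) (Suc j) * g (n - Suc j))" for n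
    unfolding g_def by (rule newton_G)
  have Nh: "of_nat n * h n = (\<Sum>j<n. S k (Suc j) * h (n - Suc j))" for n
    unfolding h_def by (rule newton_G)
  have SS: "S (Suc k) j = S k j + x ^ j" for j unfolding x_def by (rule S_Suc)
  have Nf: "of_nat n * f n = (\<Sum>j<n. S k (Suc j) * f (n - Suc j))" for n
  proof (cases n)
    case 0 then show ?thesis by simp
  next
    case (Suc m)
    define P1 where "P1 = (\<Sum>j<m. S k (Suc j) * g (m - j))"
    define P2 where "P2 = (\<Sum>j<m. x ^ Suc j * g (m - j))"
    define Q1 where "Q1 = (\<Sum>j<m. S k (Suc j) * g (m - Suc j))"
    define Q2 where "Q2 = (\<Sum>j<m. x ^ Suc j * g (m - Suc j))"
    have a: "of_nat (Suc m) * g (Suc m) = P1 + P2 + S k (Suc m) * g 0 + x ^ Suc m * g 0"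
    proof -
      have "of_nat (Suc m) * g (Suc m) = (\<Sum>j<Suc m. S (Suc k) (Suc j) * g (m - j))"
        using Ng[of "Suc m"] by simp
      also have "\<dots> = (\<Sum>j<m. S (Suc k) (Suc j) * g (m - j)) + S (Suc k) (Suc m) * g 0"
        by simp
      also have "\<dots> = P1 + P2 + S k (Suc m) * g 0 + x ^ Suc m * g 0"
        unfolding SS P1_def P2_def by (simp add: distrib_right sum.distrib)
      finally show ?thesis .
    qed
    have b: "of_nat m * g m = Q1 + Q2"
      unfolding Ng Q1_def Q2_def SS by (simp add: distrib_right sum.distrib)
    have c: "P2 + x ^ Suc m * g 0 = x * g m + x * Q2"
    proof -
      have "P2 + x ^ Suc m * g 0 = (\<Sum>j<Suc m. x ^ Suc j * g (m - j))"
        unfolding P2_def by simp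
      also have "\<dots> = x ^ Suc 0 * g m + (\<Sum>j<m. x ^ Suc (Suc j) * g (m - Suc j))"
        by (subst sum.lessThan_Suc_shift) simp
      also have "\<dots> = x * g m + x * Q2"
        unfolding Q2_def by (simp add: sum_distrib_left mult.assoc)
      finally show ?thesis .
    qed
    have d: "(\<Sum>j<n. S k (Suc j) * f (n - Suc j)) = P1 - x * Q1 + S k (Suc m) * g 0"
    proof -
      have "(\<Sum>j<n. S k (Suc j) * f (n - Suc j)) = (\<Sum>j<m. S k (Suc j) * f (m - j)) + S k (Suc m) * f 0"
        using Suc by simp
      also have "(\<Sum>j<m. S k (Suc j) * f (m - j)) = (\<Sum>j<m. S k (Suc j) * g (m - j) - x * (S k (Suc j) * g (m - Suc j)))"
      proof (rule sum.cong[OF refl])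
        fix j assume "j \<in> {..<m}"
        then have "m - j = Suc (m - Suc j)" by simp
        then show "S k (Suc j) * f (m - j) = S k (Suc j) * g (m - j) - x * (S k (Suc j) * g (m - Suc j))"
          unfolding f_def by (simp add: algebra_simps)
      qed
      also have "\<dots> = P1 - x * Q1"
        unfolding P1_def Q1_def by (simp add: sum_subtractf sum_distrib_left)
      finally show ?thesis by (simp add: f_def)
    qed
    have "of_nat n * f n = of_nat (Suc m) * g (Suc m) - x * (of_nat m * g m) - x * g m"
      unfolding f_def Suc by (simp add: algebra_simps)
    also have "\<dots> = P1 - x * Q1 + S k (Suc m) * g 0"
      unfolding a b using c by (simp add: algebra_simps)
    finally show ?thesis using d by simp
  qed
  have "f n = h n"
    by (rule newton_unique[OF Nf Nh]) (simp add: f_def g_def h_def G0)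
  then show ?thesis by (cases n) (simp_all add: f_def g_def h_def x_def)
qed

lemma G_rec: "G (Suc k) n = G k n + X (Suc k) * G (Suc k) (n - 1)"
proof (cases "n < 0")
  case True then show ?thesis by (simp add: G_neg)
next
  case False
  then obtain m where m: "n = int m" by (metis nonneg_int_cases not_less)
  show ?thesis
  proof (cases m)
    case 0 then show ?thesis using G_rec_nat[of k 0] m by (simp add: G_neg)
  next
    case (Suc m')
    then have "n - 1 = int m'" using m by simp
    then show ?thesis using G_rec_nat[of k m] m Suc by (simp add: algebra_simps)
  qed
qed




section \<open>Determinants\<close>

definition Det :: "nat \<Rightarrow> (nat \<Rightarrow> int) \<Rightarrow> cpoly" where
  "Det l b = det (mat l l (\<lambda>(i, j). p_poly (b i + int j)))"

lemma schur_Det: "schur mu = Det (length mu) (\<lambda>i. int (mu ! i) - int i)"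
  by (simp add: schur_def Det_def)

lemma pD_prod:
  "pD s (\<Prod>i\<in>A. F i) = (\<Sum>r\<in>A. \<Prod>i\<in>A. (if i = r then pD s (F i) else F i))"
proof (induction A rule: infinite_finite_induct)
  case (infinite A) then show ?case by (simp add: pD_const[of s 1, simplified])
next
  case empty then show ?case by (simp add: pD_const[of s 1, simplified])
next
  case (insert a A)
  have e1: "(\<Prod>i\<in>A. (if i = a then pD s (F i) else F i)) = (\<Prod>i\<in>A. F i)"
    by (rule prod.cong) (use insert in auto)
  have e2: "(\<Prod>i\<in>insert a A. (if i = r then pD s (F i) else F i)) = F a * (\<Prod>i\<in>A. (if i = r then pD s (F i) else F i))"
    if "r \<in> A" for r
    using insert that by (subst prod.insert) auto
  have "pD s (\<Prod>i\<in>insert a A. F i) = pD s (F a) * (\<Prod>i\<in>A. F i) + F a * pD s (\<Prod>i\<in>A. F i)"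
    using insert by (simp add: pD_mult)
  also have "\<dots> = (\<Prod>i\<in>insert a A. (if i = a then pD s (F i) else F i))
      + (\<Sum>r\<in>A. F a * (\<Prod>i\<in>A. (if i = r then pD s (F i) else F i)))"
    using insert e1 by (simp add: sum_distrib_left)
  also have "(\<Sum>r\<in>A. F a * (\<Prod>i\<in>A. (if i = r then pD s (F i) else F i)))
     = (\<Sum>r\<in>A. \<Prod>i\<in>insert a A. (if i = r then pD s (F i) else F i))"
    by (rule sum.cong[OF refl], rule e2[symmetric])
  also have "(\<Prod>i\<in>insert a A. (if i = a then pD s (F i) else F i))
      + (\<Sum>r\<in>A. \<Prod>i\<in>insert a A. (if i = r then pD s (F i) else F i))
     = (\<Sum>r\<in>insert a A. \<Prod>i\<in>insert a A. (if i = r then pD s (F i) else F i))"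
    by (subst sum.insert[OF insert(1,2)]) (rule refl)
  finally show ?case .
qed

lemma pD_Det:
  assumes s: "s \<ge> 1"
  shows "pD s (Det l b) = (\<Sum>r<l. Det l (b(r := b r - int s)))"
proof -
  let ?P = "{p. p permutes {0..<l}}"
  have fin: "finite ?P" by (simp add: finite_permutations)
  have D: "Det l b' = (\<Sum>p\<in>?P. signof p * (\<Prod>i=0..<l. p_poly (b' i + int (p i))))" for b'
  proof -
    have "Det l b' = (\<Sum>p\<in>?P. signof p * (\<Prod>i=0..<l. mat l l (\<lambda>(i, j). p_poly (b' i + int j)) $$ (i, p i)))"
      unfolding Det_def by (rule det_def') simp
    also have "\<dots> = (\<Sum>p\<in>?P. signof p * (\<Prod>i=0..<l. p_poly (b' i + int (p i))))"
    proof (rule sum.cong[OF refl])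
      fix p assume "p \<in> ?P"
      then have "p i < l" if "i < l" for i using that permutes_in_image by fastforce
      then show "signof p * (\<Prod>i=0..<l. mat l l (\<lambda>(i, j). p_poly (b' i + int j)) $$ (i, p i)) =
           signof p * (\<Prod>i=0..<l. p_poly (b' i + int (p i)))"
        by (auto intro!: prod.cong)
    qed
    finally show ?thesis .
  qed
  have "pD s (Det l b) = (\<Sum>p\<in>?P. signof p * pD s (\<Prod>i=0..<l. p_poly (b i + int (p i))))"
    unfolding D by (simp add: pD_sum pD_mult)
  also have "\<dots> = (\<Sum>p\<in>?P. \<Sum>r<l. signof p * (\<Prod>i=0..<l. p_poly ((b(r := b r - int s)) i + int (p i))))"
  proof (rule sum.cong[OF refl])
    fix p
    have "pD s (\<Prod>i=0..<l. p_poly (b i + int (p i))) = (\<Sum>r\<in>{0..<l}. \<Prod>i=0..<l. p_poly ((b(r := b r - int s)) i + int (p i)))"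
      unfolding pD_prod
      by (intro sum.cong refl prod.cong) (auto simp: pD_p[OF s] algebra_simps)
    then show "signof p * pD s (\<Prod>i=0..<l. p_poly (b i + int (p i))) =
         (\<Sum>r<l. signof p * (\<Prod>i=0..<l. p_poly ((b(r := b r - int s)) i + int (p i))))"
      by (simp add: sum_distrib_left atLeast0LessThan)
  qed
  also have "\<dots> = (\<Sum>r<l. Det l (b(r := b r - int s)))"
    unfolding D by (rule sum.swap)
  finally show ?thesis .
qed

inductive comb :: "nat \<Rightarrow> (nat \<Rightarrow> int) \<Rightarrow> nat \<Rightarrow> cpoly \<Rightarrow> bool" for l a0 where
  zero: "comb l a0 W 0"
| add: "comb l a0 W P \<Longrightarrow> comb l a0 W Q \<Longrightarrow> comb l a0 W (P + Q)"
| gen: "(\<forall>i<l. b i \<le> a0 i) \<Longrightarrow> (\<Sum>i<l. a0 i - b i) = int W \<Longrightarrow> comb l a0 W (Det l b)"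

lemma comb_sum: "(\<And>x. x \<in> A \<Longrightarrow> comb l a0 W (F x)) \<Longrightarrow> comb l a0 W (sum F A)"
  by (induction A rule: infinite_finite_induct) (auto intro: comb.intros)

lemma comb_pD:
  assumes "comb l a0 W P" "s \<ge> 1"
  shows "comb l a0 (W + s) (pD s P)"
  using assms(1)
proof induction
  case zero then show ?case by (simp add: comb.zero)
next
  case (add W P Q) then show ?case by (simp add: pD_add comb.add)
next
  case (gen b W)
  show ?case unfolding pD_Det[OF assms(2)]
  proof (rule comb_sum, rule comb.gen)
    fix r assume r: "r \<in> {..<l}"
    show "\<forall>i<l. (b(r := b r - int s)) i \<le> a0 i" using gen by auto
    have "(\<Sum>i<l. a0 i - (b(r := b r - int s)) i) = (\<Sum>i<l. (a0 i - b i) + (if i = r then int s else 0))"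
      by (rule sum.cong) auto
    also have "\<dots> = int W + int s" using gen r by (simp add: sum.distrib)
    finally show "(\<Sum>i<l. a0 i - (b(r := b r - int s)) i) = int (W + s)" by simp
  qed
qed

lemma comb_pow:
  assumes "comb l a0 W P" "s \<ge> 1"
  shows "comb l a0 (W + n * s) ((pD s ^^ n) P)"
proof (induction n)
  case 0 then show ?case using assms by simp
next
  case (Suc n)
  then show ?case using comb_pD[OF Suc assms(2)] by (simp add: add_ac)
qed

lemma comb_foldr:
  assumes "comb l a0 W P" "\<forall>i\<in>set xs. i \<ge> 1"
  shows "comb l a0 (W + (\<Sum>i\<leftarrow>xs. i * lk alpha i)) (foldr (\<lambda>i. pD i ^^ lk alpha i) xs P)"
  using assms(2)
proof (induction xs)
  case Nil then show ?case using assms(1) by simp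
next
  case (Cons x xs)
  then have "comb l a0 (W + (\<Sum>i\<leftarrow>xs. i * lk alpha i) + lk alpha x * x)
     ((pD x ^^ lk alpha x) (foldr (\<lambda>i. pD i ^^ lk alpha i) xs P))"
    by (intro comb_pow) auto
  then show ?case by (simp add: add_ac mult.commute)
qed

lemma comb_dpow:
  assumes "comb l a0 W P" "lk alpha 0 = 0"
  shows "comb l a0 (W + wt alpha) (dpow alpha P)"
proof -
  let ?xs = "sorted_list_of_set (ky alpha)"
  have "\<forall>i\<in>set ?xs. i \<ge> 1" using assms(2) by (auto simp: in_keys_iff Suc_le_eq intro: gr0I)
  from comb_foldr[OF assms(1) this, of alpha]
  have "comb l a0 (W + (\<Sum>i\<leftarrow>?xs. i * lk alpha i)) (dpow alpha P)" by (simp add: dpow_def)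
  moreover have "(\<Sum>i\<leftarrow>?xs. i * lk alpha i) = wt alpha"
    by (simp add: wt_def sum_list_distinct_conv_sum_set)
  ultimately show ?thesis by simp
qed

section \<open>Column reduction\<close>

definition Lv :: "nat \<Rightarrow> nat \<Rightarrow> nat \<Rightarrow> nat \<Rightarrow> nat" where
  "Lv k m q j = (if j \<le> m then k - j else if j < q then k - m else k - Suc m)"

abbreviation MM :: "nat \<Rightarrow> (nat \<Rightarrow> int) \<Rightarrow> (nat \<Rightarrow> nat) \<Rightarrow> cpoly mat" where
  "MM l c lev \<equiv> mat l l (\<lambda>(i, j). G (lev j) (c i + int j))"

lemma MM_cong: "(\<And>j. j < l \<Longrightarrow> lev j = lev' j) \<Longrightarrow> MM l c lev = MM l c lev'"
  by (rule eq_matI) auto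

lemma G_down: "G K n = G (Suc K) n - X (Suc K) * G (Suc K) (n - 1)"
  using G_rec[of K n] by simp

lemma col_step:
  assumes mk: "m < k" and mq: "m < q" and ql: "q < l"
  shows "det (MM l c (Lv k m q)) = det (MM l c (Lv k m (Suc q)))"
proof -
  let ?A = "MM l c (Lv k m (Suc q))"
  let ?x = "X (k - m)"
  have A: "?A \<in> carrier_mat l l" by simp
  have km: "k - m = Suc (k - Suc m)" using mk by simp
  have eq: "MM l c (Lv k m q) = addcol (- ?x) q (q - 1) ?A"
  proof (rule eq_matI)
    fix i j assume i: "i < dim_row (addcol (- ?x) q (q - 1) ?A)" and j: "j < dim_col (addcol (- ?x) q (q - 1) ?A)"
    then have il: "i < l" and jl: "j < l" by auto
    show "MM l c (Lv k m q) $$ (i, j) = addcol (- ?x) q (q - 1) ?A $$ (i, j)"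
    proof (cases "j = q")
      case True
      have l1: "Lv k m (Suc q) q = k - m" using mq by (simp add: Lv_def)
      have l2: "Lv k m (Suc q) (q - 1) = k - m" using mq by (auto simp: Lv_def)
      have l3: "Lv k m q q = k - Suc m" using mq by (simp add: Lv_def)
      have q1: "int (q - 1) = int q - 1" using mq by simp
      have "addcol (- ?x) q (q - 1) ?A $$ (i, j) = - ?x * G (k - m) (c i + int (q - 1)) + G (k - m) (c i + int q)"
        using il jl True ql l1 l2 by simp
      also have "\<dots> = G (k - Suc m) (c i + int q)"
        unfolding km G_down[of "k - Suc m" "c i + int q"] q1 by (simp add: algebra_simps)
      finally show ?thesis using il jl True l3 by simp
    next
      case False
      have "Lv k m q j = Lv k m (Suc q) j" using False by (auto simp: Lv_def)
      then show ?thesis using il jl False by simp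
    qed
  qed auto
  show ?thesis unfolding eq by (rule det_addcol[where n=l]) (use mq ql in auto)
qed

lemma col_inner:
  assumes mk: "m < k" and "Suc m \<le> q" and "q \<le> l"
  shows "det (MM l c (Lv k m q)) = det (MM l c (\<lambda>j. k - min j m))"
proof -
  from assms(3) show ?thesis
  proof (induction rule: inc_induct)
    case base
    have "MM l c (Lv k m l) = MM l c (\<lambda>j. k - min j m)"
      by (rule MM_cong) (auto simp: Lv_def)
    then show ?case by simp
  next
    case (step n)
    have "m < n" using step assms(2) by simp
    then show ?case using col_step[OF mk _ step(2), of c] step by simp
  qed
qed

lemma col_outer:
  assumes "m \<le> k"
  shows "det (MM l c (\<lambda>j. k - min j m)) = det (MM l c (\<lambda>j. k))"
  using assms
proof (induction m)
  case 0 then show ?case by simp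
next
  case (Suc m)
  have mk: "m < k" using Suc by simp
  have "det (MM l c (\<lambda>j. k - min j (Suc m))) = det (MM l c (\<lambda>j. k - min j m))"
  proof (cases "Suc m \<le> l")
    case True
    have "MM l c (\<lambda>j. k - min j (Suc m)) = MM l c (Lv k m (Suc m))"
      by (rule MM_cong) (auto simp: Lv_def)
    then show ?thesis using col_inner[OF mk order.refl True, of c] by simp
  next
    case False
    have "MM l c (\<lambda>j. k - min j (Suc m)) = MM l c (\<lambda>j. k - min j m)"
      by (rule MM_cong) (use False in auto)
    then show ?thesis by simp
  qed
  then show ?case using Suc mk by simp
qed

section \<open>Vanishing\<close>

lemma sum_threshold:
  fixes f :: "nat \<Rightarrow> int"
  assumes "finite A" "finite B" "card A = card B" "\<forall>x\<in>A. t \<le> f x" "\<forall>y\<in>B. f y \<le> t"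
  shows "sum f B \<le> sum f A"
proof -
  have "sum f B \<le> of_nat (card B) * t" using sum_bounded_above[of B f t] assms by auto
  also have "\<dots> = of_nat (card A) * t" using assms by simp
  also have "\<dots> \<le> sum f A" using sum_bounded_below[of A t f] assms by auto
  finally show ?thesis .
qed

lemma sum_swap_ineq:
  fixes f :: "nat \<Rightarrow> int"
  assumes fin: "finite Sa" "finite Ta" and c: "card Sa = card Ta"
    and "\<forall>x\<in>Sa - Ta. t \<le> f x" "\<forall>y\<in>Ta - Sa. f y \<le> t"
  shows "sum f Ta \<le> sum f Sa"
proof -
  have "card (Sa - Ta) = card Sa - card (Sa \<inter> Ta)" using fin by (simp add: card_Diff_subset_Int)
  moreover have "card (Ta - Sa) = card Ta - card (Ta \<inter> Sa)" using fin by (simp add: card_Diff_subset_Int)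
  ultimately have cc: "card (Sa - Ta) = card (Ta - Sa)" using c by (simp add: Int_commute)
  have "sum f (Ta - Sa) \<le> sum f (Sa - Ta)"
    by (rule sum_threshold) (use fin cc assms in auto)
  moreover have "sum f Sa = sum f (Sa \<inter> Ta) + sum f (Sa - Ta)" using fin by (simp add: sum.Int_Diff)
  moreover have "sum f Ta = sum f (Ta \<inter> Sa) + sum f (Ta - Sa)" using fin by (simp add: sum.Int_Diff)
  ultimately show ?thesis by (simp add: Int_commute)
qed

lemma G0_ne: "n \<noteq> 0 \<Longrightarrow> G 0 n = 0"
proof (cases "n < 0")
  case True then show ?thesis by (simp add: G_neg)
next
  case False
  assume "n \<noteq> 0"
  then obtain m where "n = int m" "m \<noteq> 0" using False by (metis int_nat_eq nat_0_le not_less of_nat_0)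
  then show ?thesis using G_zero_var[of m] by simp
qed

lemma det_vanish:
  fixes mu :: "nat \<Rightarrow> nat" and b :: "nat \<Rightarrow> int"
  assumes mono: "\<And>i j. i \<le> j \<Longrightarrow> mu j \<le> mu i"
    and ble: "\<forall>i<l. b i \<le> int (mu i) - int i"
    and W: "(\<Sum>i<l. (int (mu i) - int i) - b i) = int W"
    and Wlt: "W < (\<Sum>i\<in>{k..<l}. mu i)"
  shows "det (MM l b (\<lambda>j. k - min j k)) = 0"
proof -
  let ?P = "{p. p permutes {0..<l}}"
  have "det (MM l b (\<lambda>j. k - min j k)) = (\<Sum>p\<in>?P. signof p * (\<Prod>i=0..<l. MM l b (\<lambda>j. k - min j k) $$ (i, p i)))"
    by (rule det_def') simp
  also have "\<dots> = 0"
  proof (rule sum.neutral, rule ballI)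
    fix p assume "p \<in> ?P"
    then have perm: "p permutes {..<l}" by (simp add: atLeast0LessThan)
    have pl: "p i < l" if "i < l" for i using perm that permutes_in_image by fastforce
    have "\<exists>i\<in>{0..<l}. MM l b (\<lambda>j. k - min j k) $$ (i, p i) = 0"
    proof (rule ccontr)
      assume na: "\<not> ?thesis"
      have nz: "G (k - min (p i) k) (b i + int (p i)) \<noteq> 0" if "i < l" for i
      proof -
        have "i \<in> {0..<l}" using that by simp
        then have "MM l b (\<lambda>j. k - min j k) $$ (i, p i) \<noteq> 0" using na by blast
        then show ?thesis using that pl[OF that] by simp
      qed
      define Sa where "Sa = {i\<in>{..<l}. k \<le> p i}"
      define Ta where "Ta = {k..<l}"
      have finS: "finite Sa" and finT: "finite Ta" by (auto simp: Sa_def Ta_def)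
      have bS: "b i = - int (p i)" if "i \<in> Sa" for i
      proof -
        have "G 0 (b i + int (p i)) \<noteq> 0" using nz[of i] that by (auto simp: Sa_def)
        then have "b i + int (p i) = 0" using G0_ne by blast
        then show ?thesis by linarith
      qed
      have img: "p ` Sa = Ta"
      proof
        show "p ` Sa \<subseteq> Ta" using pl by (auto simp: Sa_def Ta_def)
        show "Ta \<subseteq> p ` Sa"
        proof
          fix j assume j: "j \<in> Ta"
          then have "j \<in> p ` {..<l}" using permutes_image[OF perm] by (auto simp: Ta_def)
          then obtain i where "i < l" "p i = j" by auto
          then show "j \<in> p ` Sa" using j by (auto simp: Sa_def Ta_def)
        qed
      qed
      have inj: "inj_on p Sa" by (rule inj_on_subset[OF permutes_inj[OF perm] subset_UNIV])
      have cST: "card Sa = card Ta" using card_image[OF inj] img by simp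
      have sumpS: "(\<Sum>i\<in>Sa. int (p i)) = (\<Sum>j\<in>Ta. int j)"
        using sum.reindex[OF inj, of int] img by simp
      define w where "w i = (int (mu i) - int i) - b i" for i
      have w0: "w i \<ge> 0" if "i < l" for i using ble that by (simp add: w_def)
      have SW: "(\<Sum>i\<in>Sa. w i) \<le> int W"
      proof -
        have "(\<Sum>i\<in>Sa. w i) \<le> (\<Sum>i<l. w i)"
          by (rule sum_mono2) (auto simp: Sa_def w0)
        then show ?thesis using W by (simp add: w_def)
      qed
      have kl: "k < l"
      proof (rule ccontr)
        assume "\<not> k < l" then have "{k..<l} = {}" by simp
        then show False using Wlt by simp
      qed
      have i1: "(\<Sum>i\<in>Ta. int (mu i)) \<le> (\<Sum>i\<in>Sa. int (mu i))"
        by (rule sum_swap_ineq[OF finS finT cST, where t="int (mu k)"])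
           (auto simp: Sa_def Ta_def intro: mono)
      have i2: "(\<Sum>i\<in>Sa. int i) \<le> (\<Sum>i\<in>Ta. int i)"
        by (rule sum_swap_ineq[OF finT finS cST[symmetric], where t="int k"])
           (auto simp: Sa_def Ta_def)
      have "(\<Sum>i\<in>Sa. w i) = (\<Sum>i\<in>Sa. int (mu i)) - (\<Sum>i\<in>Sa. int i) + (\<Sum>i\<in>Sa. int (p i))"
      proof -
        have "(\<Sum>i\<in>Sa. w i) = (\<Sum>i\<in>Sa. int (mu i) - int i + int (p i))"
          by (rule sum.cong) (simp_all add: w_def bS)
        then show ?thesis by (simp add: sum_subtractf sum.distrib)
      qed
      then have "(\<Sum>i\<in>Ta. int (mu i)) \<le> (\<Sum>i\<in>Sa. w i)" using i1 i2 sumpS by simp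
      moreover have "int W < (\<Sum>i\<in>Ta. int (mu i))"
      proof -
        have "int W < int (sum mu {k..<l})" using Wlt by linarith
        then show ?thesis by (simp add: Ta_def of_nat_sum)
      qed
      ultimately show False using SW by simp
    qed
    then have "(\<Prod>i=0..<l. MM l b (\<lambda>j. k - min j k) $$ (i, p i)) = 0"
      by (rule prod_zero[rotated]) simp
    then show "signof p * (\<Prod>i=0..<l. MM l b (\<lambda>j. k - min j k) $$ (i, p i)) = 0" by simp
  qed
  finally show ?thesis .
qed

lemma eval_Det: "eval_at k (Det l b) = det (MM l b (\<lambda>j. k))"
proof -
  interpret ev: comm_ring_hom "eval_at k" by (rule ev_hom)
  have "map_mat (eval_at k) (mat l l (\<lambda>(i, j). p_poly (b i + int j))) = MM l b (\<lambda>j. k)"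
    by (rule eq_matI) (auto simp: G_def)
  then show ?thesis unfolding Det_def using ev.hom_det by metis
qed

lemma comb_vanish:
  assumes "comb l a0 W P"
    and a0: "\<And>i. a0 i = int (mu i) - int i"
    and mono: "\<And>i j. i \<le> j \<Longrightarrow> mu j \<le> mu i"
    and Wlt: "W < (\<Sum>i\<in>{k..<l}. mu i)"
    and kl: "k \<le> l"
  shows "eval_at k P = 0"
  using assms(1) Wlt
proof (induction rule: comb.induct)
  case (zero W) then show ?case by (simp add: ev_zero)
next
  case (add W P Q) then show ?case by (simp add: ev_add)
next
  case (gen b W)
  have "eval_at k (Det l b) = det (MM l b (\<lambda>j. k))" by (rule eval_Det)
  also have "\<dots> = det (MM l b (\<lambda>j. k - min j k))" using col_outer[of k k l b] by simp
  also have "\<dots> = 0"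
    by (rule det_vanish[OF mono]) (use gen a0 in auto)
  finally show ?case .
qed

lemma Det_cong: "(\<And>i. i < l \<Longrightarrow> b i = b' i) \<Longrightarrow> Det l b = Det l b'"
proof -
  assume h: "\<And>i. i < l \<Longrightarrow> b i = b' i"
  have "mat l l (\<lambda>(i, j). p_poly (b i + int j)) = mat l l (\<lambda>(i, j). p_poly (b' i + int j))"
    by (rule eq_matI) (auto simp: h)
  then show ?thesis by (simp add: Det_def)
qed

lemma sum_list_drop: "sum_list (drop k xs) = (\<Sum>i\<in>{k..<length xs}. xs ! i)"
proof (cases "k \<le> length xs")
  case True
  have "sum_list (drop k xs) = (\<Sum>i=0..<length xs - k. xs ! (i + k))"
    using True by (simp add: sum_list_sum_nth add.commute)
  also have "\<dots> = (\<Sum>i\<in>{0 + k..<(length xs - k) + k}. xs ! i)"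
    by (rule sum.shift_bounds_nat_ivl[symmetric])
  finally show ?thesis using True by simp
next
  case False then show ?thesis by simp
qed

lemma part_mono:
  assumes "is_partition mu" "i \<le> j"
  shows "part mu j \<le> part mu i"
proof -
  have s: "sorted_wrt (\<ge>) mu" using assms(1) by (simp add: is_partition_def)
  show ?thesis
  proof (cases "j < length mu")
    case True
    then show ?thesis using assms(2) s
      by (cases "i = j") (auto simp: part_def sorted_wrt_iff_nth_less)
  next
    case False then show ?thesis by (simp add: part_def)
  qed
qed

lemma term_zero:
  assumes lam: "is_partition lam" and kl: "k \<le> length lam - 1" and l1: "length lam \<ge> 1"
    and a0: "lk alpha 0 = 0" and wt: "wt alpha < N_lk lam k"
    and mu: "is_partition mu" and le: "mu = lam \<or> part_less lam mu"
  shows "eval_at k (dpow alpha (schur mu)) = 0"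
proof -
  have ple: "part lam i \<le> part mu i" for i using le by (auto simp: part_less_def)
  have len: "length lam \<le> length mu"
  proof (rule ccontr)
    assume "\<not> ?thesis"
    then have lt: "length mu < length lam" by simp
    let ?j = "length lam - 1"
    have "lam ! ?j \<noteq> 0" using lam l1 by (metis One_nat_def diff_less is_partition_def less_numeral_extra(1) nth_mem order_less_le_trans)
    then have "part lam ?j > 0" using l1 by (simp add: part_def)
    moreover have "part mu ?j = 0" using lt by (simp add: part_def)
    ultimately show False using ple[of ?j] by simp
  qed
  define L where "L = length mu"
  define a0' where "a0' i = int (part mu i) - int i" for i
  have sch: "schur mu = Det L a0'"
    unfolding schur_Det L_def by (rule Det_cong) (simp add: a0'_def part_def)
  have c0: "comb L a0' 0 (Det L a0')" by (rule comb.gen) auto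
  have c: "comb L a0' (0 + wt alpha) (dpow alpha (schur mu))"
    unfolding sch by (rule comb_dpow[OF c0 a0])
  have "N_lk lam k = (\<Sum>i\<in>{k..<length lam}. lam ! i)" by (simp add: N_lk_def sum_list_drop)
  also have "\<dots> \<le> (\<Sum>i\<in>{k..<length lam}. part mu i)"
  proof (rule sum_mono)
    fix i assume "i \<in> {k..<length lam}"
    then have "lam ! i = part lam i" by (simp add: part_def)
    then show "lam ! i \<le> part mu i" using ple[of i] by simp
  qed
  also have "\<dots> \<le> (\<Sum>i\<in>{k..<L}. part mu i)"
    by (rule sum_mono2) (use len in \<open>auto simp: L_def\<close>)
  finally have Nle: "N_lk lam k \<le> (\<Sum>i\<in>{k..<L}. part mu i)" .
  show ?thesis
    by (rule comb_vanish[OF c, of "part mu"])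
       (use wt Nle kl len l1 part_mono[OF mu] in \<open>auto simp: a0'_def L_def\<close>)
qed

theorem proposition3p1:
  fixes lam :: "nat list" and xi :: "nat list \<Rightarrow> complex"
    and k :: nat and alpha :: "nat \<Rightarrow>\<^sub>0 nat"
  assumes "is_partition lam"
    and "k \<le> length lam - 1" and "length lam \<ge> 1"
    and "Poly_Mapping.lookup alpha 0 = 0"
    and "wt alpha < N_lk lam k"
  shows "\<forall>beta. ((\<lambda>mu. (if mu = lam then 1 else xi mu)
                   * Poly_Mapping.lookup (eval_at k (dpow alpha (schur mu))) beta)
               has_sum 0) {mu. is_partition mu \<and> (mu = lam \<or> part_less lam mu)}"
proof
  fix beta
  show "((\<lambda>mu. (if mu = lam then 1 else xi mu)
                   * Poly_Mapping.lookup (eval_at k (dpow alpha (schur mu))) beta)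
               has_sum 0) {mu. is_partition mu \<and> (mu = lam \<or> part_less lam mu)}"
  proof (rule has_sum_0)
    fix mu assume "mu \<in> {mu. is_partition mu \<and> (mu = lam \<or> part_less lam mu)}"
    then have "eval_at k (dpow alpha (schur mu)) = 0"
      using term_zero[OF assms] by blast
    then show "(if mu = lam then 1 else xi mu) * Poly_Mapping.lookup (eval_at k (dpow alpha (schur mu))) beta = 0"
      by simp
  qed
qed


end
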